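(* Let $n\ge4$, $a>1$, and let $f_a(\Gamma)$ be the closed curve parameterized for $\phi\in[0,2n\pi]$ by $$u(\phi)=-\Big(\tfrac{a+1}{n}\cos\phi-\tfrac{a+1}{n+1}\cos\big(\tfrac{n+1}{n}\phi\big)\Big)-1,\qquad v(\phi)=-\Big(\tfrac{a-1}{n}\sin\phi-\tfrac{a-1}{n+1}\sin\big(\tfrac{n+1}{n}\phi\big)\Big).$$ Then $f_a(\Gamma)$ meets the real axis to the right of its center $-1$ in exactly $\lfloor\frac{n+1}{2}\rfloor$ distinct points. If $n$ is even, each of these points is a double intersection (attained for two parameter values in $[0,2n\pi)$); if $n$ is odd, each is a double intersection except the outermost one, which is attained for exactly one parameter value ($\phi=n\pi$). *)

theory Defs
  imports Complex_Main
begin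

definition cu :: "nat \<Rightarrow> real \<Rightarrow> real \<Rightarrow> real" where
  "cu n a \<phi> = - ((a + 1) / real n * cos \<phi> - (a + 1) / (real n + 1) * cos ((real n + 1) / real n * \<phi>)) - 1"

definition cv :: "nat \<Rightarrow> real \<Rightarrow> real \<Rightarrow> real" where
  "cv n a \<phi> = - ((a - 1) / real n * sin \<phi> - (a - 1) / (real n + 1) * sin ((real n + 1) / real n * \<phi>))"

definition hit_params :: "nat \<Rightarrow> real \<Rightarrow> real \<Rightarrow> real set" where
  "hit_params n a x = {\<phi>. 0 \<le> \<phi> \<and> \<phi> < 2 * real n * pi \<and> cv n a \<phi> = 0 \<and> cu n a \<phi> = x}"

definition right_axis_points :: "nat \<Rightarrow> real \<Rightarrow> real set" where
  "right_axis_points n a = {x. x > -1 \<and> hit_params n a x \<noteq> {}}"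

end

theory Submission
  imports Defs
begin


definition mm :: "nat \<Rightarrow> real" where "mm n = 2 * real n + 1"
definition FF :: "nat \<Rightarrow> real \<Rightarrow> real" where
  "FF n y = cos y * sin (mm n * y) - mm n * sin y * cos (mm n * y)"
definition HH :: "nat \<Rightarrow> real \<Rightarrow> real" where
  "HH n y = cos (mm n * y) * cos y + mm n * sin (mm n * y) * sin y"

lemma cv_eq:
  assumes "n > 0"
  shows "cv n a (2 * real n * y) = - (a - 1) / (real n * (real n + 1)) * FF n y"
proof -
  define w where "w = mm n * y"
  have e1: "(real n + 1) / real n * (2 * real n * y) = w + y"
    using assms by (simp add: w_def mm_def field_simps)
  have e2: "2 * real n * y = w - y" by (simp add: w_def mm_def algebra_simps)
  have m: "mm n = 2 * real n + 1" by (simp add: mm_def)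
  have "cv n a (2 * real n * y) = - ((a - 1) / real n * (sin w * cos y - cos w * sin y)
     - (a - 1) / (real n + 1) * (sin w * cos y + cos w * sin y))"
    unfolding cv_def e1 by (simp add: e2 sin_add sin_diff)
  moreover have B: "FF n y = cos y * sin w - (2 * real n + 1) * sin y * cos w"
    unfolding FF_def w_def m ..
  ultimately show ?thesis
    using assms unfolding B by (simp add: divide_simps) (simp add: algebra_simps)
qed

lemma cu_eq:
  assumes "n > 0"
  shows "cu n a (2 * real n * y) = - (a + 1) / (real n * (real n + 1)) * HH n y - 1"
proof -
  define w where "w = mm n * y"
  have e1: "(real n + 1) / real n * (2 * real n * y) = w + y"
    using assms by (simp add: w_def mm_def field_simps)
  have e2: "2 * real n * y = w - y" by (simp add: w_def mm_def algebra_simps)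
  have m: "mm n = 2 * real n + 1" by (simp add: mm_def)
  have "cu n a (2 * real n * y) = - ((a + 1) / real n * (cos w * cos y + sin w * sin y)
     - (a + 1) / (real n + 1) * (cos w * cos y - sin w * sin y)) - 1"
    unfolding cu_def e1 by (simp add: e2 cos_add cos_diff)
  moreover have B: "HH n y = cos w * cos y + (2 * real n + 1) * sin w * sin y"
    unfolding HH_def w_def m ..
  ultimately show ?thesis
    using assms unfolding B by (simp add: divide_simps) (simp add: algebra_simps)
qed

lemma FF_HH_sq: "(FF n y)^2 + (HH n y)^2 = (cos y)^2 + (mm n)^2 * (sin y)^2"
proof -
  have "(FF n y)^2 + (HH n y)^2 = ((cos y)^2 + (mm n)^2 * (sin y)^2) * ((sin (mm n * y))^2 + (cos (mm n * y))^2)"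
    unfolding FF_def HH_def by algebra
  then show ?thesis by simp
qed

lemma HH_sign:
  assumes "FF n y = 0"
  shows "mm n * sin y * HH n y = sin (mm n * y) * ((cos y)^2 + (mm n)^2 * (sin y)^2)"
proof -
  have "mm n * sin y * cos (mm n * y) = cos y * sin (mm n * y)" using assms by (simp add: FF_def)
  then show ?thesis unfolding HH_def by (simp add: algebra_simps power2_eq_square)
qed

lemma FF_deriv: "(FF n has_real_derivative ((mm n)^2 - 1) * sin y * sin (mm n * y)) (at y)"
  unfolding FF_def
  by (rule derivative_eq_intros refl)+ (simp add: algebra_simps power2_eq_square)

lemma FF_cont: "continuous_on A (FF n)"
  unfolding FF_def by (intro continuous_intros)


lemma sin_shift: "sin w = (-1)^k * sin (w - real k * pi)"
proof -
  have "sin (w - real k * pi) = (-1)^k * sin w" by (simp add: sin_diff)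
  then have "(-1)^k * sin (w - real k * pi) = ((-1)^k * (-1)^k) * sin w" by simp
  also have "(-1::real)^k * (-1)^k = 1" by (simp add: power_add[symmetric])
  finally show ?thesis by simp
qed

lemma sin_odd_neg:
  assumes "odd k" "real k * pi < w" "w < (real k + 1) * pi"
  shows "sin w < 0"
proof -
  have "sin (w - real k * pi) > 0" using assms by (intro sin_gt_zero) (auto simp: algebra_simps)
  moreover have "(-1::real)^k = -1" using assms by simp
  ultimately show ?thesis using sin_shift[of w k] by simp
qed

lemma sin_neg_odd:
  assumes "real k * pi \<le> w" "w < (real k + 1) * pi" "sin w < 0"
  shows "odd k"
proof (rule ccontr)
  assume "\<not> odd k"
  then have "(-1::real)^k = 1" by simp
  moreover have "sin (w - real k * pi) \<ge> 0" using assms by (intro sin_ge_zero) (auto simp: algebra_simps)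
  ultimately show False using sin_shift[of w k] assms(3) by simp
qed

lemma mm_gt: "n > 0 \<Longrightarrow> mm n > 1" by (simp add: mm_def)

lemma FF_decr:
  assumes "n > 0" "0 \<le> p" "q \<le> pi" "p \<le> s" "s < t" "t \<le> q"
    and neg: "\<And>y. p < y \<Longrightarrow> y < q \<Longrightarrow> sin (mm n * y) < 0"
  shows "FF n t < FF n s"
proof (rule DERIV_neg_imp_decreasing_open[OF \<open>s < t\<close>])
  fix x assume x: "s < x" "x < t"
  have "sin x > 0" using x assms by (intro sin_gt_zero) auto
  moreover have "(mm n)^2 - 1 > 0" using mm_gt[OF assms(1)] by (smt (verit) one_less_power pos2)
  moreover have "sin (mm n * x) < 0" using x assms by (intro neg) auto
  ultimately have "((mm n)^2 - 1) * sin x * sin (mm n * x) < 0"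
    by (simp add: mult_pos_neg)
  then show "\<exists>y. (FF n has_real_derivative y) (at x) \<and> y < 0" using FF_deriv by blast
qed (rule FF_cont)

lemma FF_grid: "n > 0 \<Longrightarrow> FF n (real k * pi / mm n) = - mm n * sin (real k * pi / mm n) * (-1)^k"
proof -
  assume "n > 0"
  then have "mm n * (real k * pi / mm n) = real k * pi" using mm_gt[of n] by simp
  then show ?thesis unfolding FF_def by simp
qed

lemma mm_pi2: "mm n * (pi / 2) = real n * pi + pi / 2"
  by (simp add: mm_def algebra_simps)

lemma FF_pi2: "FF n (pi / 2) = 0"
  unfolding FF_def mm_pi2 by (simp add: cos_add)

lemma sin_mm_pi2: "sin (mm n * (pi / 2)) = (-1)^n"
  unfolding mm_pi2 by (simp add: sin_add)

lemma mm_pi: "mm n * pi = real (2 * n + 1) * pi"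
  by (simp add: mm_def)

lemma FF_sym: "FF n (pi - y) = - FF n y"
proof -
  have "mm n * (pi - y) = real (2 * n + 1) * pi - mm n * y" using mm_pi[of n] by (simp add: algebra_simps)
  moreover have "cos ((1 + 2 * real n) * pi) = -1" using cos_npi[of "2*n+1"] by simp
  moreover have "sin ((1 + 2 * real n) * pi) = 0" using sin_npi[of "2*n+1"] by simp
  ultimately show ?thesis unfolding FF_def by (simp add: sin_diff cos_diff)
qed

lemma HH_sym: "HH n (pi - y) = HH n y"
proof -
  have "mm n * (pi - y) = real (2 * n + 1) * pi - mm n * y" using mm_pi[of n] by (simp add: algebra_simps)
  moreover have "cos ((1 + 2 * real n) * pi) = -1" using cos_npi[of "2*n+1"] by simp
  moreover have "sin ((1 + 2 * real n) * pi) = 0" using sin_npi[of "2*n+1"] by simp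
  ultimately show ?thesis unfolding HH_def by (simp add: sin_diff cos_diff)
qed

lemma HH_sq_zero:
  assumes "FF n y = 0"
  shows "(HH n y)^2 = 1 + ((mm n)^2 - 1) * (sin y)^2"
  using FF_HH_sq[of n y] assms cos_squared_eq[of y] by (simp add: algebra_simps)

lemma HH_neg_iff:
  assumes "n > 0" "0 < y" "y < pi" "FF n y = 0"
  shows "HH n y < 0 \<longleftrightarrow> sin (mm n * y) < 0"
proof -
  have sp: "sin y > 0" using assms by (intro sin_gt_zero) auto
  have p1: "mm n * sin y > 0" using sp mm_gt[OF assms(1)] by simp
  have "(mm n * sin y)^2 > 0" using p1 by (intro zero_less_power) 
  then have "(mm n)^2 * (sin y)^2 > 0" by (simp add: power_mult_distrib)
  moreover have "(cos y)^2 \<ge> 0" by simp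
  ultimately have p2: "(cos y)^2 + (mm n)^2 * (sin y)^2 > 0" by linarith
  define P where "P = mm n * sin y"
  define Q where "Q = (cos y)^2 + (mm n)^2 * (sin y)^2"
  define s where "s = sin (mm n * y)"
  have e: "P * HH n y = s * Q"
    using HH_sign[OF assms(4)] unfolding P_def Q_def s_def by simp
  have P: "P > 0" and Q: "Q > 0" using p1 p2 unfolding P_def Q_def by auto
  have "HH n y < 0 \<longleftrightarrow> P * HH n y < 0" using P by (simp add: mult_less_0_iff)
  also have "\<dots> \<longleftrightarrow> s * Q < 0" using e by simp
  also have "\<dots> \<longleftrightarrow> s < 0" using Q by (simp add: mult_less_0_iff)
  finally show ?thesis unfolding s_def .
qed
lemma mm_sq_gt: "n > 0 \<Longrightarrow> (mm n)^2 - 1 > 0"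
proof -
  assume "n > 0"
  then have "mm n > 1" by (rule mm_gt)
  then have "1 < (mm n)^2" by (intro one_less_power) auto
  then show ?thesis by simp
qed

lemma same_HH:
  assumes "n > 0" "0 \<le> y" "y \<le> pi" "0 \<le> z" "z \<le> pi" "FF n y = 0" "FF n z = 0" "HH n y = HH n z"
  shows "y = z \<or> y = pi - z"
proof -
  have m: "(mm n)^2 - 1 > 0" using mm_sq_gt[OF assms(1)] .
  have "((mm n)^2 - 1) * (sin y)^2 = ((mm n)^2 - 1) * (sin z)^2"
    using HH_sq_zero[OF assms(6)] HH_sq_zero[OF assms(7)] assms(8) by (metis add_left_cancel)
  then have "(sin y)^2 = (sin z)^2" using m by simp
  moreover have "sin y \<ge> 0" "sin z \<ge> 0" using assms by (auto intro: sin_ge_zero)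
  ultimately have "sin y = sin z" using power2_eq_iff_nonneg by blast
  then have "(cos y)^2 = (cos z)^2" by (simp only: cos_squared_eq)
  then have "cos y = cos z \<or> cos y = - cos z" using power2_eq_iff by blast
  then show ?thesis
  proof
    assume "cos y = cos z" then show ?thesis using assms cos_inj_pi by blast
  next
    assume "cos y = - cos z"
    then have "cos y = cos (pi - z)" by simp
    then show ?thesis using assms cos_inj_pi[of y "pi - z"] by auto
  qed
qed

definition SS :: "nat \<Rightarrow> real set" where
  "SS n = {z. 0 < z \<and> z \<le> pi / 2 \<and> FF n z = 0 \<and> sin (mm n * z) < 0}"
definition SS' :: "nat \<Rightarrow> real set" where
  "SS' n = {z. 0 < z \<and> z < pi / 2 \<and> FF n z = 0 \<and> sin (mm n * z) < 0}"

lemma floor_nat_bounds: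
  assumes "0 \<le> x"
  shows "real (nat \<lfloor>x\<rfloor>) \<le> x" "x < real (nat \<lfloor>x\<rfloor>) + 1"
proof -
  have e: "real (nat \<lfloor>x\<rfloor>) = of_int \<lfloor>x\<rfloor>" using assms by simp
  show "real (nat \<lfloor>x\<rfloor>) \<le> x" unfolding e by (rule of_int_floor_le)
  show "x < real (nat \<lfloor>x\<rfloor>) + 1" unfolding e by (rule real_of_int_floor_add_one_gt)
qed

lemma floor_nat_eq:
  assumes "real k \<le> x" "x < real k + 1"
  shows "nat \<lfloor>x\<rfloor> = k"
proof -
  have "\<lfloor>x\<rfloor> = int k" using assms by (intro floor_unique) auto
  then show ?thesis by simp
qed

lemma SS'_props:
  assumes "n > 0" "z \<in> SS' n"
  defines "k \<equiv> nat \<lfloor>mm n * z / pi\<rfloor>"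
  shows "odd k \<and> k + 1 \<le> n \<and> real k * pi < mm n * z \<and> mm n * z < (real k + 1) * pi"
proof -
  have z: "0 < z" "z < pi / 2" "FF n z = 0" "sin (mm n * z) < 0" using assms(2) by (auto simp: SS'_def)
  have m1: "mm n > 1" using mm_gt[OF assms(1)] .
  define w where "w = mm n * z"
  have w0: "w > 0" using z m1 by (simp add: w_def)
  have x0: "0 \<le> w / pi" using w0 by simp
  have b1: "real k * pi \<le> w"
    using floor_nat_bounds(1)[OF x0] unfolding k_def w_def by (simp add: pos_le_divide_eq)
  have b2: "w < (real k + 1) * pi"
    using floor_nat_bounds(2)[OF x0] unfolding k_def w_def by (simp add: pos_divide_less_eq)
  have sw: "sin w < 0" using z by (simp add: w_def)
  have ok: "odd k" using sin_neg_odd[OF b1 b2 sw] .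
  have b1': "real k * pi < w"
  proof (rule ccontr)
    assume "\<not> real k * pi < w"
    then have "w = real k * pi" using b1 by simp
    then show False using sw by simp
  qed
  have "w < mm n * (pi / 2)" using z m1 by (simp add: w_def)
  then have "w < real n * pi + pi / 2" by (simp only: mm_pi2)
  then have "real k * pi < (real n + 1/2) * pi" using b1 by (simp add: algebra_simps)
  then have "real k < real n + 1/2" by simp
  then have kn: "k \<le> n" by linarith
  have "k \<noteq> n"
  proof
    assume kn: "k = n"
    then have on: "odd n" using ok by simp
    have p: "real n * pi / mm n \<le> z" using b1 kn m1 by (simp add: w_def pos_divide_le_eq mult.commute)
    have "FF n (pi / 2) < FF n z"
    proof (rule FF_decr[OF assms(1), of "real n * pi / mm n" "pi / 2"])
      show "0 \<le> real n * pi / mm n" using m1 by simp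
      fix y assume y: "real n * pi / mm n < y" "y < pi / 2"
      have l: "real n * pi < mm n * y" using y(1) m1 by (simp add: pos_divide_less_eq mult.commute)
      have "mm n * y < mm n * (pi / 2)" using y(2) m1 by simp
      then have "mm n * y < real n * pi + pi / 2" by (simp only: mm_pi2)
      moreover have "(real n + 1) * pi = real n * pi + pi" by (simp add: algebra_simps)
      ultimately have "mm n * y < (real n + 1) * pi" using pi_gt_zero by linarith
      with l show "sin (mm n * y) < 0" using sin_odd_neg[OF on] by blast
    qed (use p z in auto)
    then show False using FF_pi2 z by simp
  qed
  with kn have "k + 1 \<le> n" by simp
  then show ?thesis using ok b1' b2 by (simp add: w_def)
qed

lemma FF_unique_cell:
  assumes "n > 0" "odd k" "k + 1 \<le> 2 * n + 1"
    and "real k * pi \<le> mm n * z1" "mm n * z1 \<le> (real k + 1) * pi"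
    and "real k * pi \<le> mm n * z2" "mm n * z2 \<le> (real k + 1) * pi"
    and "FF n z1 = 0" "FF n z2 = 0"
  shows "z1 = z2"
proof -
  have m1: "mm n > 1" using mm_gt[OF assms(1)] .
  have q: "(real k + 1) * pi / mm n \<le> pi"
  proof -
    have "real k + 1 \<le> mm n" using assms(3) unfolding mm_def by linarith
    then have "(real k + 1) * pi \<le> mm n * pi" by simp
    then show ?thesis using m1 by (simp add: pos_divide_le_eq mult.commute)
  qed
  have p: "0 \<le> real k * pi / mm n" using m1 by simp
  have neg: "sin (mm n * y) < 0" if "real k * pi / mm n < y" "y < (real k + 1) * pi / mm n" for y
  proof -
    have "real k * pi < mm n * y" using that(1) m1 by (simp add: pos_divide_less_eq mult.commute)
    moreover have "mm n * y < (real k + 1) * pi" using that(2) m1 by (simp add: pos_less_divide_eq mult.commute)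
    ultimately show ?thesis using sin_odd_neg[OF assms(2)] by blast
  qed
  have le: "real k * pi / mm n \<le> z" "z \<le> (real k + 1) * pi / mm n"
    if "real k * pi \<le> mm n * z" "mm n * z \<le> (real k + 1) * pi" for z
    using that m1 by (simp_all add: pos_divide_le_eq pos_le_divide_eq mult.commute)
  show ?thesis
  proof (rule linorder_cases[of z1 z2])
    assume "z1 < z2"
    then have "FF n z2 < FF n z1"
      using FF_decr[OF assms(1) p q le(1)[OF assms(4,5)] \<open>z1 < z2\<close> le(2)[OF assms(6,7)] neg] by blast
    then show ?thesis using assms by simp
  next
    assume "z2 < z1"
    then have "FF n z1 < FF n z2"
      using FF_decr[OF assms(1) p q le(1)[OF assms(6,7)] \<open>z2 < z1\<close> le(2)[OF assms(4,5)] neg] by blast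
    then show ?thesis using assms by simp
  qed
qed

lemma SS'_bij:
  assumes "n > 0"
  shows "bij_betw (\<lambda>z. nat \<lfloor>mm n * z / pi\<rfloor> div 2) (SS' n) {..< n div 2}"
  unfolding bij_betw_def
proof (intro conjI)
  have m1: "mm n > 1" using mm_gt[OF assms] .
  show "inj_on (\<lambda>z. nat \<lfloor>mm n * z / pi\<rfloor> div 2) (SS' n)"
  proof (rule inj_onI)
    fix z1 z2 assume z1: "z1 \<in> SS' n" and z2: "z2 \<in> SS' n"
      and eq: "nat \<lfloor>mm n * z1 / pi\<rfloor> div 2 = nat \<lfloor>mm n * z2 / pi\<rfloor> div 2"
    define k1 where "k1 = nat \<lfloor>mm n * z1 / pi\<rfloor>"
    define k2 where "k2 = nat \<lfloor>mm n * z2 / pi\<rfloor>"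
    have P1: "odd k1 \<and> k1 + 1 \<le> n \<and> real k1 * pi < mm n * z1 \<and> mm n * z1 < (real k1 + 1) * pi"
      using SS'_props[OF assms z1] unfolding k1_def .
    have P2: "odd k2 \<and> k2 + 1 \<le> n \<and> real k2 * pi < mm n * z2 \<and> mm n * z2 < (real k2 + 1) * pi"
      using SS'_props[OF assms z2] unfolding k2_def .
    have "k1 div 2 = k2 div 2" using eq unfolding k1_def k2_def .
    then have "k1 = k2" using P1 P2 by (metis odd_two_times_div_two_succ)
    then show "z1 = z2"
      using FF_unique_cell[OF assms, of k1 z1 z2] P1 P2 z1 z2 by (auto simp: SS'_def)
  qed
  show "(\<lambda>z. nat \<lfloor>mm n * z / pi\<rfloor> div 2) ` SS' n = {..< n div 2}"
  proof
    show "(\<lambda>z. nat \<lfloor>mm n * z / pi\<rfloor> div 2) ` SS' n \<subseteq> {..< n div 2}"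
    proof
      fix j assume "j \<in> (\<lambda>z. nat \<lfloor>mm n * z / pi\<rfloor> div 2) ` SS' n"
      then obtain z where z: "z \<in> SS' n" and j: "j = nat \<lfloor>mm n * z / pi\<rfloor> div 2" by auto
      define k where "k = nat \<lfloor>mm n * z / pi\<rfloor>"
      have "odd k \<and> k + 1 \<le> n" using SS'_props[OF assms z] unfolding k_def by blast
      then have "k div 2 < n div 2" by presburger
      then show "j \<in> {..< n div 2}" using j k_def by simp
    qed
  next
    show "{..< n div 2} \<subseteq> (\<lambda>z. nat \<lfloor>mm n * z / pi\<rfloor> div 2) ` SS' n"
    proof
      fix j assume "j \<in> {..< n div 2}"
      then have jn: "2 * j + 2 \<le> n" by auto
      define k where "k = 2 * j + 1"
      have ok: "odd k" by (simp add: k_def)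
      define p where "p = real k * pi / mm n"
      define q where "q = real (k + 1) * pi / mm n"
      have mp: "mm n * p = real k * pi" using m1 by (simp add: p_def)
      have mq: "mm n * q = real (k + 1) * pi" using m1 by (simp add: q_def)
      have pq: "p < q" using m1 by (simp add: p_def q_def divide_strict_right_mono)
      have p0: "0 < p" using m1 by (simp add: p_def k_def)
      have "real (k + 1) < mm n" using jn unfolding k_def mm_def by simp
      then have qpi: "q < pi" using m1 by (simp add: q_def pos_divide_less_eq mult.commute)
      have "2 * real (k + 1) < mm n" using jn unfolding k_def mm_def by simp
      then have "2 * real (k + 1) * pi < mm n * pi" by (intro mult_strict_right_mono) auto
      then have q2: "q < pi / 2" using m1 by (simp add: q_def pos_divide_less_eq field_simps)
      have Fp: "FF n p > 0"
      proof -
        have "FF n p = - mm n * sin p * (-1)^k" unfolding p_def by (rule FF_grid[OF assms])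
        moreover have "sin p > 0" using p0 pq qpi by (intro sin_gt_zero) auto
        ultimately show ?thesis using ok m1 by simp
      qed
      have Fq: "FF n q < 0"
      proof -
        have "FF n q = - mm n * sin q * (-1)^(k+1)" unfolding q_def by (rule FF_grid[OF assms])
        moreover have "sin q > 0" using p0 pq qpi by (intro sin_gt_zero) auto
        ultimately show ?thesis using ok m1 by simp
      qed
      obtain z where z: "p \<le> z" "z \<le> q" "FF n z = 0"
        using IVT2'[of "FF n" q 0 p, OF _ _ _ FF_cont] Fp Fq pq by force
      have zp: "z \<noteq> p" "z \<noteq> q" using z Fp Fq by auto
      have "p < z" using z(1) zp by simp
      then have "mm n * p < mm n * z" using m1 by simp
      then have l: "real k * pi < mm n * z" using mp by simp
      have "z < q" using z(2) zp by simp
      then have "mm n * z < mm n * q" using m1 by simp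
      then have r: "mm n * z < (real k + 1) * pi" using mq by (simp add: add.commute)
      have sz: "sin (mm n * z) < 0" using sin_odd_neg[OF ok l r] .
      have "z \<in> SS' n" unfolding SS'_def using z zp p0 q2 sz by auto
      moreover have "nat \<lfloor>mm n * z / pi\<rfloor> = k"
        by (rule floor_nat_eq) (use l r in \<open>simp_all add: pos_le_divide_eq pos_divide_less_eq\<close>)
      moreover have "k div 2 = j" by (simp add: k_def)
      ultimately show "j \<in> (\<lambda>z. nat \<lfloor>mm n * z / pi\<rfloor> div 2) ` SS' n" by force
    qed
  qed
qed

lemma SS'_card: "n > 0 \<Longrightarrow> finite (SS' n) \<and> card (SS' n) = n div 2"
proof -
  assume n: "n > 0"
  note b = SS'_bij[OF n]
  have "finite (SS' n)" using bij_betw_finite[OF b] by simp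
  moreover have "card (SS' n) = n div 2" using bij_betw_same_card[OF b] by simp
  ultimately show ?thesis by blast
qed

lemma SS_eq: "SS n = SS' n \<union> (if odd n then {pi / 2} else {})"
proof -
  have "pi / 2 \<in> SS n \<longleftrightarrow> odd n"
    unfolding SS_def using FF_pi2[of n] sin_mm_pi2[of n] by auto
  moreover have "SS n = SS' n \<union> (SS n \<inter> {pi / 2})" unfolding SS_def SS'_def by auto
  ultimately show ?thesis by auto
qed

lemma SS_card: "n > 0 \<Longrightarrow> finite (SS n) \<and> card (SS n) = (n + 1) div 2"
proof -
  assume n: "n > 0"
  have nin: "pi / 2 \<notin> SS' n" by (simp add: SS'_def)
  have f: "finite (SS' n)" and c: "card (SS' n) = n div 2" using SS'_card[OF n] by auto
  show ?thesis
  proof (cases "odd n")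
    case True
    then have e: "SS n = insert (pi / 2) (SS' n)" using SS_eq[of n] by simp
    have "card (SS n) = Suc (n div 2)" unfolding e using f nin c by simp
    moreover have "Suc (n div 2) = (n + 1) div 2" using True by presburger
    ultimately show ?thesis using e f by simp
  next
    case False
    then have e: "SS n = SS' n" using SS_eq[of n] by simp
    have "n div 2 = (n + 1) div 2" using False by presburger
    then show ?thesis using e f c by simp
  qed
qed

definition vv :: "nat \<Rightarrow> real \<Rightarrow> real \<Rightarrow> real" where
  "vv n a z = - (a + 1) / (real n * (real n + 1)) * HH n z - 1"

lemma SS_sub: "z \<in> SS n \<Longrightarrow> 0 < z \<and> z \<le> pi / 2 \<and> FF n z = 0 \<and> sin (mm n * z) < 0"
  by (simp add: SS_def)

lemma hit_SS:
  assumes n: "n > 0" and a: "a > 1" and z: "z \<in> SS n"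
  shows "hit_params n a (vv n a z) = {2 * real n * z, 2 * real n * (pi - z)}"
proof -
  have zz: "0 < z" "z \<le> pi / 2" "FF n z = 0" using SS_sub[OF z] by auto
  have N: "real n * (real n + 1) > 0" using n by simp
  have rn: "real n > 0" using n by simp
  show ?thesis
  proof
    show "hit_params n a (vv n a z) \<subseteq> {2 * real n * z, 2 * real n * (pi - z)}"
    proof
      fix \<phi> assume "\<phi> \<in> hit_params n a (vv n a z)"
      then have h: "0 \<le> \<phi>" "\<phi> < 2 * real n * pi" "cv n a \<phi> = 0" "cu n a \<phi> = vv n a z"
        by (auto simp: hit_params_def)
      define y where "y = \<phi> / (2 * real n)"
      have py: "\<phi> = 2 * real n * y" using rn by (simp add: y_def)
      have y0: "0 \<le> y" using h rn by (simp add: y_def)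
      have y1: "y \<le> pi" using h(2) rn by (simp add: y_def pos_divide_le_eq mult.commute)
      have "- (a - 1) / (real n * (real n + 1)) * FF n y = 0" using h(3) cv_eq[OF n, of a y] py by simp
      then have Fy: "FF n y = 0" using a N n by simp
      have "- (a + 1) / (real n * (real n + 1)) * HH n y - 1 = - (a + 1) / (real n * (real n + 1)) * HH n z - 1"
        using h(4) cu_eq[OF n, of a y] py by (simp add: vv_def)
      then have Hy: "HH n y = HH n z" using a N n by simp
      have "y = z \<or> y = pi - z" using same_HH[OF n y0 y1 _ _ Fy zz(3) Hy] zz by simp
      then show "\<phi> \<in> {2 * real n * z, 2 * real n * (pi - z)}" using py by auto
    qed
  next
    have one: "2 * real n * y \<in> hit_params n a (vv n a z)"
      if "0 \<le> y" "y < pi" "FF n y = 0" "HH n y = HH n z" for y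
    proof -
      have "2 * real n * y < 2 * real n * pi" using that rn by simp
      then show ?thesis unfolding hit_params_def
        using that cv_eq[OF n, of a y] cu_eq[OF n, of a y] by (simp add: vv_def)
    qed
    have "2 * real n * z \<in> hit_params n a (vv n a z)"
      using one[of z] zz pi_gt_zero by linarith
    moreover have "2 * real n * (pi - z) \<in> hit_params n a (vv n a z)"
      using one[of "pi - z"] zz FF_sym[of n z] HH_sym[of n z] by simp
    ultimately show "{2 * real n * z, 2 * real n * (pi - z)} \<subseteq> hit_params n a (vv n a z)" by simp
  qed
qed

lemma HH0: "n > 0 \<Longrightarrow> HH n 0 = 1" by (simp add: HH_def)

lemma RAP_eq:
  assumes n: "n > 0" and a: "a > 1"
  shows "right_axis_points n a = vv n a ` SS n"
proof
  have N: "real n * (real n + 1) > 0" using n by simp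
  have rn: "real n > 0" using n by simp
  have c: "(a + 1) / (real n * (real n + 1)) > 0" using a N by simp
  define C where "C = (a + 1) / (real n * (real n + 1))"
  have vvC: "vv n a y = - (C * HH n y) - 1" for y unfolding vv_def C_def by (metis minus_divide_left mult_minus_left)
  have vneg: "vv n a y > -1 \<longleftrightarrow> HH n y < 0" for y
  proof -
    have "vv n a y > -1 \<longleftrightarrow> C * HH n y < 0" unfolding vvC by linarith
    also have "\<dots> \<longleftrightarrow> HH n y < 0" using c unfolding C_def[symmetric] by (simp add: mult_less_0_iff)
    finally show ?thesis .
  qed
  show "right_axis_points n a \<subseteq> vv n a ` SS n"
  proof
    fix x assume "x \<in> right_axis_points n a"
    then obtain \<phi> where x: "x > -1" and "\<phi> \<in> hit_params n a x" by (auto simp: right_axis_points_def)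
    then have h: "0 \<le> \<phi>" "\<phi> < 2 * real n * pi" "cv n a \<phi> = 0" "cu n a \<phi> = x"
      by (auto simp: hit_params_def)
    define y where "y = \<phi> / (2 * real n)"
    have py: "\<phi> = 2 * real n * y" using rn by (simp add: y_def)
    have y0: "0 \<le> y" using h rn by (simp add: y_def)
    have y1: "y < pi" using h(2) rn by (simp add: y_def pos_divide_less_eq mult.commute)
    have "- (a - 1) / (real n * (real n + 1)) * FF n y = 0" using h(3) cv_eq[OF n, of a y] py by simp
    then have Fy: "FF n y = 0" using a N n by simp
    have xv: "x = vv n a y" using h(4) cu_eq[OF n, of a y] py by (simp add: vv_def)
    have Hy: "HH n y < 0" using x xv vneg by simp
    have yp: "y > 0" using y0 Hy HH0[OF n] by (cases "y = 0") auto
    show "x \<in> vv n a ` SS n"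
    proof (cases "y \<le> pi / 2")
      case True
      have "sin (mm n * y) < 0" using HH_neg_iff[OF n yp y1 Fy] Hy by simp
      then have "y \<in> SS n" using True yp Fy by (simp add: SS_def)
      then show ?thesis using xv by blast
    next
      case False
      define z where "z = pi - y"
      have z0: "0 < z" "z < pi" "z \<le> pi / 2" using False y1 yp by (auto simp: z_def)
      have Fz: "FF n z = 0" using Fy FF_sym[of n y] by (simp add: z_def)
      have Hz: "HH n z = HH n y" using HH_sym[of n y] by (simp add: z_def)
      have "sin (mm n * z) < 0" using HH_neg_iff[OF n z0(1,2) Fz] Hy Hz by simp
      then have "z \<in> SS n" using z0 Fz by (simp add: SS_def)
      moreover have "vv n a z = x" using xv Hz by (simp add: vv_def)
      ultimately show ?thesis by blast
    qed
  qed
  show "vv n a ` SS n \<subseteq> right_axis_points n a"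
  proof
    fix x assume "x \<in> vv n a ` SS n"
    then obtain z where z: "z \<in> SS n" and xz: "x = vv n a z" by auto
    have zz: "0 < z" "z \<le> pi / 2" "FF n z = 0" "sin (mm n * z) < 0" using SS_sub[OF z] by auto
    have "HH n z < 0" using HH_neg_iff[OF n zz(1) _ zz(3)] zz pi_gt_zero by fastforce
    then have "x > -1" using vneg xz by simp
    moreover have "hit_params n a x \<noteq> {}" using hit_SS[OF n a z] xz by simp
    ultimately show "x \<in> right_axis_points n a" by (simp add: right_axis_points_def)
  qed
qed

lemma vv_C: "vv n a y = - ((a + 1) / (real n * (real n + 1)) * HH n y) - 1"
  unfolding vv_def by (metis minus_divide_left mult_minus_left)

lemma vv_inj:
  assumes n: "n > 0" and a: "a > 1"
  shows "inj_on (vv n a) (SS n)"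
proof (rule inj_onI)
  fix y z assume y: "y \<in> SS n" and z: "z \<in> SS n" and e: "vv n a y = vv n a z"
  have c: "(a + 1) / (real n * (real n + 1)) > 0" using a n by simp
  have "(a + 1) / (real n * (real n + 1)) * HH n y = (a + 1) / (real n * (real n + 1)) * HH n z"
    using e unfolding vv_C by linarith
  then have H: "HH n y = HH n z" using c n a by simp
  have yy: "0 < y" "y \<le> pi / 2" "FF n y = 0" using SS_sub[OF y] by auto
  have zz: "0 < z" "z \<le> pi / 2" "FF n z = 0" using SS_sub[OF z] by auto
  have "y = z \<or> y = pi - z" using same_HH[OF n _ _ _ _ yy(3) zz(3) H] yy zz by simp
  then show "y = z" using yy zz by auto
qed

lemma vv_le:
  assumes n: "n > 0" and a: "a > 1" and z: "z \<in> SS n" and o: "odd n"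
  shows "vv n a z \<le> vv n a (pi / 2)"
proof -
  have c: "(a + 1) / (real n * (real n + 1)) > 0" using a n by simp
  have zz: "0 < z" "z \<le> pi / 2" "FF n z = 0" "sin (mm n * z) < 0" using SS_sub[OF z] by auto
  have sp: "sin (mm n * (pi / 2)) < 0" using sin_mm_pi2[of n] o by simp
  have Hp: "HH n (pi / 2) < 0" using HH_neg_iff[OF n _ _ FF_pi2[of n]] sp pi_gt_zero by linarith
  have "(sin z)^2 \<le> 1" using abs_sin_le_one[of z] abs_square_le_1 by blast
  then have l: "((mm n)^2 - 1) * (sin z)^2 \<le> ((mm n)^2 - 1) * 1"
    using mm_sq_gt[OF n] by (intro mult_left_mono) auto
  have e1: "(HH n (pi / 2))^2 = 1 + ((mm n)^2 - 1) * 1" using HH_sq_zero[OF FF_pi2[of n]] by simp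
  have e2: "(HH n z)^2 = 1 + ((mm n)^2 - 1) * (sin z)^2" using HH_sq_zero[OF zz(3)] .
  have "(- HH n z)^2 \<le> (- HH n (pi / 2))^2" using e1 e2 l by simp
  moreover have "0 \<le> - HH n (pi / 2)" using Hp by linarith
  ultimately have "- HH n z \<le> - HH n (pi / 2)" by (rule power2_le_imp_le)
  then have "(a + 1) / (real n * (real n + 1)) * HH n (pi / 2) \<le> (a + 1) / (real n * (real n + 1)) * HH n z"
    using c by (intro mult_left_mono) auto
  then show ?thesis unfolding vv_C by linarith
qed

theorem lemma5:
  fixes n :: nat and a :: real
  assumes "n \<ge> 4" and "a > 1"
  shows "finite (right_axis_points n a)
     \<and> card (right_axis_points n a) = (n + 1) div 2
     \<and> (even n \<longrightarrow> (\<forall>x \<in> right_axis_points n a. card (hit_params n a x) = 2))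
     \<and> (odd n \<longrightarrow>
          (\<forall>x \<in> right_axis_points n a. x \<noteq> Max (right_axis_points n a) \<longrightarrow> card (hit_params n a x) = 2)
          \<and> hit_params n a (Max (right_axis_points n a)) = {real n * pi})"
proof -
  have n: "n > 0" using assms(1) by simp
  have a: "a > 1" using assms(2) .
  have R: "right_axis_points n a = vv n a ` SS n" using RAP_eq[OF n a] .
  have fS: "finite (SS n)" and cS: "card (SS n) = (n + 1) div 2" using SS_card[OF n] by auto
  have inj: "inj_on (vv n a) (SS n)" using vv_inj[OF n a] .
  have fin: "finite (right_axis_points n a)" using R fS by simp
  have card: "card (right_axis_points n a) = (n + 1) div 2" using R card_image[OF inj] cS by simp
  have two: "card (hit_params n a (vv n a z)) = 2" if "z \<in> SS n" "z \<noteq> pi / 2" for z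
  proof -
    have "2 * real n * z \<noteq> 2 * real n * (pi - z)" using that(2) n by auto
    then show ?thesis using hit_SS[OF n a that(1)] by simp
  qed
  have ev: "\<forall>x \<in> right_axis_points n a. card (hit_params n a x) = 2" if e: "even n"
  proof
    fix x assume "x \<in> right_axis_points n a"
    then obtain z where z: "z \<in> SS n" and xz: "x = vv n a z" using R by auto
    have "z \<noteq> pi / 2" using z e SS_eq[of n] by (auto simp: SS'_def)
    then show "card (hit_params n a x) = 2" using two z xz by simp
  qed
  have od: "(\<forall>x \<in> right_axis_points n a. x \<noteq> Max (right_axis_points n a) \<longrightarrow> card (hit_params n a x) = 2)
          \<and> hit_params n a (Max (right_axis_points n a)) = {real n * pi}" if o: "odd n"
  proof -
    have p: "pi / 2 \<in> SS n" using SS_eq[of n] o by simp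
    have M: "Max (right_axis_points n a) = vv n a (pi / 2)"
    proof (rule Max_eqI[OF fin])
      fix y assume "y \<in> right_axis_points n a"
      then obtain z where z: "z \<in> SS n" and yz: "y = vv n a z" using R by auto
      show "y \<le> vv n a (pi / 2)" using vv_le[OF n a z o] yz by simp
    next
      show "vv n a (pi / 2) \<in> right_axis_points n a" using R p by simp
    qed
    have "\<forall>x \<in> right_axis_points n a. x \<noteq> Max (right_axis_points n a) \<longrightarrow> card (hit_params n a x) = 2"
    proof (intro ballI impI)
      fix x assume "x \<in> right_axis_points n a" and ne: "x \<noteq> Max (right_axis_points n a)"
      then obtain z where z: "z \<in> SS n" and xz: "x = vv n a z" using R by auto
      have "z \<noteq> pi / 2" proof assume "z = pi / 2" then show False using ne M xz by metis qed
      then show "card (hit_params n a x) = 2" using two z xz by simp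
    qed
    moreover have "hit_params n a (Max (right_axis_points n a)) = {real n * pi}"
      unfolding M hit_SS[OF n a p] by simp
    ultimately show ?thesis by blast
  qed
  show ?thesis using fin card ev od by blast
qed

end
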